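(* Let $M\in\mathbb{R}^{p\times q}_+$ and suppose $M$ has a psd factorization of size $k$. Then $M$ admits a psd factorization $M_{ij}=\langle A_i,B_j\rangle$ with $A_i,B_j\in\mathcal{S}^k_+$ such that $\operatorname{trace}(A_i)\le k$ for all $i=1,\dots,p$ and $\operatorname{trace}(B_j)=\sum_{i=1}^pM_{ij}$ for all $j=1,\dots,q$.
   Context: $\mathcal{S}^k_+$ denotes the cone of $k\times k$ real symmetric positive semidefinite matrices, with inner product $\langle A,B\rangle = \operatorname{trace}(AB)$. A psd factorization of size $k$ of a nonnegative matrix $M\in\mathbb{R}^{p\times q}_+$ is a collection $A_1,\dots,A_p, B_1,\dots,B_q \in \mathcal{S}^k_+$ with $M_{ij} = \langle A_i, B_j\rangle$ for all $i,j$. *)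

theory Defs
  imports "HOL-Analysis.Analysis"
begin

definition psd :: "real^'k^'k \<Rightarrow> bool" where
  "psd A \<longleftrightarrow> transpose A = A \<and> (\<forall>x :: real^'k. 0 \<le> x \<bullet> (A *v x))"

definition tr_inner :: "real^'k^'k \<Rightarrow> real^'k^'k \<Rightarrow> real" where
  "tr_inner A B = trace (A ** B)"

text \<open>psd factorization of size CARD('k) of a p x q matrix M (entries M i j, i<p, j<q).\<close>
definition psd_factorization ::
  "nat \<Rightarrow> nat \<Rightarrow> (nat \<Rightarrow> nat \<Rightarrow> real) \<Rightarrow> (nat \<Rightarrow> real^'k^'k) \<Rightarrow> (nat \<Rightarrow> real^'k^'k) \<Rightarrow> bool" where
  "psd_factorization p q M A B \<longleftrightarrow>
     (\<forall>i<p. psd (A i)) \<and> (\<forall>j<q. psd (B j)) \<and>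
     (\<forall>i<p. \<forall>j<q. M i j = tr_inner (A i) (B j))"

end

theory Submission
  imports Defs
begin


lemma sym_swap:
  fixes S :: "real^'n^'n"
  assumes "transpose S = S"
  shows "x \<bullet> (S *v y) = y \<bullet> (S *v x)"
  by (metis assms dot_lmul_matrix inner_commute vector_transpose_matrix)

lemma quad_zero:
  fixes X :: "real^'n^'n"
  assumes sym: "transpose X = X" and V: "subspace V"
    and ps: "\<forall>z\<in>V. 0 \<le> z \<bullet> (X *v z)" and x: "x \<in> V" and q0: "x \<bullet> (X *v x) = 0"
    and y: "y \<in> V"
  shows "y \<bullet> (X *v x) = 0"
proof -
  define b where "b = y \<bullet> (X *v x)"
  define c where "c = y \<bullet> (X *v y)"
  have c0: "c \<ge> 0" using ps y c_def by auto
  have key: "0 \<le> 2 * t * b + t^2 * c" for t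
  proof -
    have "x + t *\<^sub>R y \<in> V" using V x y by (simp add: subspace_add subspace_scale)
    then have "0 \<le> (x + t *\<^sub>R y) \<bullet> (X *v (x + t *\<^sub>R y))" using ps by blast
    also have "\<dots> = x \<bullet> (X *v x) + t * (x \<bullet> (X *v y)) + t * (y \<bullet> (X *v x)) + t^2 * (y \<bullet> (X *v y))"
      by (simp add: matrix_vector_right_distrib matrix_vector_mult_scaleR inner_add_left inner_add_right power2_eq_square algebra_simps)
    also have "\<dots> = 2 * t * b + t^2 * c"
      using q0 sym_swap[OF sym, of x y] by (simp add: b_def c_def)
    finally show ?thesis .
  qed
  define s where "s = 1 / (c + 1)"
  have s0: "s > 0" using c0 by (simp add: s_def)
  have sc: "s * c < 1" using c0 by (simp add: s_def field_simps)
  have "0 \<le> 2 * (- (b * s)) * b + (- (b * s))^2 * c" by (rule key)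
  also have "\<dots> = b^2 * (s * (s * c - 2))" by (simp add: power2_eq_square algebra_simps)
  finally have h: "0 \<le> b^2 * (s * (s * c - 2))" .
  have "s * (s * c - 2) < 0" using s0 sc by (simp add: mult_pos_neg)
  then have "b^2 \<le> 0" using h by (smt (verit) mult_pos_neg zero_le_power2 mult_nonneg_nonpos)
  then show ?thesis unfolding b_def[symmetric] by simp
qed


lemma spectral_aux:
  fixes S :: "real^'n^'n"
  assumes sym: "transpose S = S"
  shows "subspace V \<Longrightarrow> (\<forall>x\<in>V. S *v x \<in> V) \<Longrightarrow>
    \<exists>B. B \<subseteq> V \<and> pairwise orthogonal B \<and> (\<forall>x\<in>B. norm x = 1) \<and> span B = V \<and>
        (\<forall>x\<in>B. \<exists>l. S *v x = l *\<^sub>R x)"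
proof (induction "dim V" arbitrary: V rule: less_induct)
  case less
  show ?case
  proof (cases "V = {0}")
    case True
    then show ?thesis by (intro exI[of _ "{}"]) auto
  next
    case False
    then obtain v where v: "v \<in> V" "v \<noteq> 0" using less.prems subspace_0 by blast
    define K where "K = V \<inter> sphere 0 1"
    have "compact K" unfolding K_def
      using less.prems(1) closed_subspace compact_Int_closed compact_sphere
      by (metis inf_commute)
    moreover have "K \<noteq> {}"
    proof -
      have "v /\<^sub>R norm v \<in> K" using v less.prems(1)
        by (simp add: K_def subspace_scale)
      then show ?thesis by blast
    qed
    moreover have "continuous_on K (\<lambda>x. x \<bullet> (S *v x))"
      by (intro continuous_intros linear_continuous_on matrix_vector_mul_linear) 
    ultimately obtain x0 where x0K: "x0 \<in> K" and x0max: "\<And>y. y \<in> K \<Longrightarrow> y \<bullet> (S *v y) \<le> x0 \<bullet> (S *v x0)"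
      using continuous_attains_sup by metis
    define l where "l = x0 \<bullet> (S *v x0)"
    have x0V: "x0 \<in> V" and nx0: "norm x0 = 1" using x0K by (auto simp: K_def)
    have x0x0: "x0 \<bullet> x0 = 1" using nx0 by (simp add: norm_eq_1)
    define X where "X = l *\<^sub>R mat 1 - S"
    have Xv: "X *v z = l *\<^sub>R z - S *v z" for z
      by (simp add: X_def matrix_vector_mult_diff_rdistrib flip: scaleR_matrix_vector_assoc)
    have symX: "transpose X = X"
      proof -
      have "transpose (A - B) = transpose A - transpose B" for A B :: "real^'n^'n"
        by (simp add: transpose_def vec_eq_iff)
      then show ?thesis by (simp add: X_def sym transpose_scalar)
    qed
    have psX: "\<forall>z\<in>V. 0 \<le> z \<bullet> (X *v z)"
    proof
      fix z assume zV: "z \<in> V"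
      show "0 \<le> z \<bullet> (X *v z)"
      proof (cases "z = 0")
        case True then show ?thesis by simp
      next
        case False
        let ?w = "z /\<^sub>R norm z"
        have "?w \<in> K" using zV False less.prems(1) by (simp add: K_def subspace_scale)
        then have "?w \<bullet> (S *v ?w) \<le> l" using x0max l_def by blast
        moreover have "?w \<bullet> (S *v ?w) = (z \<bullet> (S *v z)) / (norm z)^2"
          by (simp add: matrix_vector_mult_scaleR power2_eq_square divide_inverse)
        ultimately have "z \<bullet> (S *v z) \<le> l * (norm z)^2"
          using False by (simp add: divide_le_eq)
        then show ?thesis
          by (simp add: Xv inner_diff_right power2_norm_eq_inner)
      qed
    qed
    have q0: "x0 \<bullet> (X *v x0) = 0" by (simp add: Xv inner_diff_right x0x0 l_def)
    have XV: "X *v x0 \<in> V" using less.prems x0V by (simp add: Xv subspace_diff subspace_scale)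
    have "(X *v x0) \<bullet> (X *v x0) = 0"
      using quad_zero[OF symX less.prems(1) psX x0V q0 XV] .
    then have "X *v x0 = 0" by simp
    then have eig: "S *v x0 = l *\<^sub>R x0" by (simp add: Xv)
    define V' where "V' = {x \<in> V. x \<bullet> x0 = 0}"
    have subV': "subspace V'"
      using less.prems(1) unfolding V'_def subspace_def by (auto simp: inner_add_left)
    have invV': "\<forall>x\<in>V'. S *v x \<in> V'"
    proof
      fix x assume "x \<in> V'"
      then have "x \<in> V" "x \<bullet> x0 = 0" by (auto simp: V'_def)
      moreover have "(S *v x) \<bullet> x0 = x \<bullet> (S *v x0)"
        using sym_swap[OF sym, of x0 x] by (simp add: inner_commute)
      ultimately show "S *v x \<in> V'" using less.prems(2) eig by (simp add: V'_def)
    qed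
    have "dim V' < dim V"
    proof (rule dim_psubset)
      have "V' \<subseteq> V" by (auto simp: V'_def)
      moreover have "x0 \<notin> V'" using x0x0 by (simp add: V'_def)
      ultimately show "span V' \<subset> span V"
        using subV' less.prems(1) x0V by (metis psubsetI span_eq_iff)
    qed
    then obtain B' where B': "B' \<subseteq> V'" "pairwise orthogonal B'" "\<forall>x\<in>B'. norm x = 1"
        "span B' = V'" "\<forall>x\<in>B'. \<exists>l. S *v x = l *\<^sub>R x"
      using less.hyps subV' invV' by blast
    show ?thesis
    proof (intro exI[of _ "insert x0 B'"] conjI)
      show "insert x0 B' \<subseteq> V" using B'(1) x0V by (auto simp: V'_def)
      show "pairwise orthogonal (insert x0 B')"
        using B'(1,2) by (auto simp: pairwise_insert V'_def orthogonal_def inner_commute)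
      show "\<forall>x\<in>insert x0 B'. norm x = 1" using B'(3) nx0 by auto
      show "\<forall>x\<in>insert x0 B'. \<exists>l. S *v x = l *\<^sub>R x" using B'(5) eig by auto
      show "span (insert x0 B') = V"
      proof
        show "span (insert x0 B') \<subseteq> V"
          using \<open>insert x0 B' \<subseteq> V\<close> less.prems(1) by (simp add: span_minimal)
        show "V \<subseteq> span (insert x0 B')"
        proof
          fix z assume zV: "z \<in> V"
          define w where "w = z - (z \<bullet> x0) *\<^sub>R x0"
          have "w \<in> V'" using zV x0V less.prems(1) x0x0
            by (simp add: V'_def w_def subspace_diff subspace_scale inner_diff_left)
          then have "w \<in> span (insert x0 B')" using B'(4)
            by (metis span_mono subset_insertI subsetD)
          moreover have "(z \<bullet> x0) *\<^sub>R x0 \<in> span (insert x0 B')"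
            by (simp add: span_base span_mul)
          ultimately have "w + (z \<bullet> x0) *\<^sub>R x0 \<in> span (insert x0 B')" by (rule span_add)
          then show "z \<in> span (insert x0 B')" by (simp add: w_def)
        qed
      qed
    qed
  qed
qed


lemma congr_entry:
  fixes U S :: "real^'n^'n"
  shows "(transpose U ** S ** U) $ a $ b = column a U \<bullet> (S *v column b U)"
  by (simp add: matrix_matrix_mult_def transpose_def inner_vec_def matrix_vector_mult_def
      column_def sum_distrib_left sum_distrib_right mult_ac) (subst sum.swap, simp add: mult_ac)

lemma diagonalize:
  fixes S :: "real^'n^'n"
  assumes sym: "transpose S = S"
  shows "\<exists>U. orthogonal_matrix U \<and> (\<forall>a b. a \<noteq> b \<longrightarrow> (transpose U ** S ** U) $ a $ b = 0)"
proof -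
  obtain B where B: "pairwise orthogonal B" "\<forall>x\<in>B. norm x = 1" "span B = UNIV"
      "\<forall>x\<in>B. \<exists>l. S *v x = l *\<^sub>R x"
    using spectral_aux[OF sym, of UNIV] by auto
  have "0 \<notin> B" using B(2) by force
  then have ind: "independent B" using B(1) pairwise_orthogonal_independent by blast
  have "card B = dim (UNIV :: (real^'n) set)"
    using basis_card_eq_dim[of B UNIV] ind B(3) by auto
  then have cB: "card B = CARD('n)" by simp
  obtain f where f: "bij_betw f (UNIV::'n set) B"
    by (metis cB finite_class.finite_UNIV finite_same_card_bij finiteI_independent ind card_UNIV)
  have fn[simp]: "\<And>i. norm (f i) = 1"
    using bij_betwE [OF f] B(2) by blast
  have fo[simp]: "\<And>i j. i \<noteq> j \<Longrightarrow> orthogonal (f i) (f j)"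
    using B(1) f by (auto simp: pairwise_def bij_betw_def inj_on_def)
  define U where "U = (\<chi> i j. f j $ i)"
  have col: "column j U = f j" for j by (simp add: U_def column_def)
  show ?thesis
  proof (intro exI[of _ U] conjI allI impI)
    show "orthogonal_matrix U"
      by (simp add: orthogonal_matrix_orthonormal_columns col)
    fix a b :: 'n assume ab: "a \<noteq> b"
    obtain l where "S *v f b = l *\<^sub>R f b" using B(4) bij_betwE[OF f] by blast
    then show "(transpose U ** S ** U) $ a $ b = 0"
      using fo[OF ab] by (simp add: congr_entry col orthogonal_def)
  qed
qed


lemma mat_add_rdistrib:
  fixes A B :: "real^'n^'m" and C :: "real^'p^'n"
  shows "(A + B) ** C = A ** C + B ** C"
  by (simp add: vec_eq_iff matrix_matrix_mult_def sum.distrib ring_distribs)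

lemma sum_congr_mat:
  fixes U :: "real^'n^'n" and A :: "nat \<Rightarrow> real^'n^'n"
  shows "(\<Sum>i<p. transpose U ** A i ** U) = transpose U ** (\<Sum>i<p. A i) ** U"
  by (induction p) (simp_all add: matrix_add_ldistrib mat_add_rdistrib)

lemma inner_transpose_mv:
  fixes U :: "real^'n^'n"
  shows "x \<bullet> (transpose U *v y) = (U *v x) \<bullet> y"
  by (metis dot_lmul_matrix inner_commute transpose_matrix_vector)

lemma psd_congr:
  fixes U A :: "real^'n^'n"
  assumes "psd A"
  shows "psd (transpose U ** A ** U)"
  unfolding psd_def
proof (intro conjI allI)
  show "transpose (transpose U ** A ** U) = transpose U ** A ** U"
    using assms by (simp add: psd_def matrix_transpose_mul matrix_mul_assoc)
  fix x :: "real^'n"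
  have "x \<bullet> ((transpose U ** A ** U) *v x) = (U *v x) \<bullet> (A *v (U *v x))"
  proof -
    have "(transpose U ** A ** U) *v x = transpose U *v (A *v (U *v x))"
      by (simp add: matrix_vector_mul_assoc matrix_mul_assoc)
    then show ?thesis by (simp only: inner_transpose_mv)
  qed
  then show "0 \<le> x \<bullet> ((transpose U ** A ** U) *v x)"
    using assms by (simp add: psd_def)
qed

lemma tr_congr:
  fixes U A B :: "real^'n^'n"
  assumes "orthogonal_matrix U"
  shows "tr_inner (transpose U ** A ** U) (transpose U ** B ** U) = tr_inner A B"
proof -
  have UU: "U ** transpose U = mat 1" using assms by (simp add: orthogonal_matrix_def)
  have "(transpose U ** A ** U) ** (transpose U ** B ** U) = transpose U ** (A ** B) ** U"
    by (simp add: matrix_mul_assoc) (metis UU matrix_mul_assoc matrix_mul_rid)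
  then have "tr_inner (transpose U ** A ** U) (transpose U ** B ** U) = trace (transpose U ** ((A ** B) ** U))"
    by (simp add: tr_inner_def matrix_mul_assoc)
  also have "\<dots> = trace (((A ** B) ** U) ** transpose U)" by (rule trace_mul_sym)
  also have "\<dots> = trace (A ** B)" by (simp add: UU flip: matrix_mul_assoc)
  finally show ?thesis by (simp add: tr_inner_def)
qed

lemma trace_mult_formula:
  fixes Y Z :: "real^'n^'n"
  shows "trace (Y ** Z) = (\<Sum>a\<in>UNIV. \<Sum>b\<in>UNIV. Y$a$b * Z$b$a)"
  by (simp add: trace_def matrix_matrix_mult_def)

lemma psd_scale:
  fixes X :: "real^'n^'n"
  assumes "psd X"
  shows "psd (\<chi> a b. g a * X$a$b * g b)"
  unfolding psd_def
proof (intro conjI allI)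
  have "X$b$a = X$a$b" for a b using assms unfolding psd_def
    by (metis transpose_def vec_lambda_beta)
  then show "transpose (\<chi> a b. g a * X$a$b * g b) = (\<chi> a b. g a * X$a$b * g b)"
    by (simp add: transpose_def vec_eq_iff mult_ac)
  fix x :: "real^'n"
  define y where "y = (\<chi> a. g a * x$a)"
  have "x \<bullet> ((\<chi> a b. g a * X$a$b * g b) *v x) = y \<bullet> (X *v y)"
    by (simp add: y_def inner_vec_def matrix_vector_mult_def sum_distrib_left mult_ac)
  then show "0 \<le> x \<bullet> ((\<chi> a b. g a * X$a$b * g b) *v x)"
    using assms by (simp add: psd_def)
qed

lemma psd_diag:
  fixes X :: "real^'n^'n"
  assumes "psd X"
  shows "0 \<le> X$a$a"
proof -
  have "0 \<le> axis a 1 \<bullet> (X *v axis a 1)" using assms by (simp add: psd_def)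
  then show ?thesis by (simp add: inner_axis' matrix_vector_mult_basis column_def)
qed

lemma psd_zero_row:
  fixes X :: "real^'n^'n"
  assumes "psd X" "X$a$a = 0"
  shows "X$a$b = 0" "X$b$a = 0"
proof -
  have sym: "transpose X = X" using assms by (simp add: psd_def)
  have "axis b 1 \<bullet> (X *v axis a 1) = 0"
    apply (rule quad_zero[OF sym subspace_UNIV])
    using assms by (auto simp: psd_def inner_axis' matrix_vector_mult_basis column_def)
  then show "X$b$a = 0" by (simp add: inner_axis' matrix_vector_mult_basis column_def)
  then show "X$a$b = 0" using sym by (metis transpose_def vec_lambda_beta)
qed


theorem lemma2p10:
  fixes p q :: nat and M :: "nat \<Rightarrow> nat \<Rightarrow> real"
    and A0 B0 :: "nat \<Rightarrow> real^'k^'k"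
  assumes nonneg: "\<forall>i<p. \<forall>j<q. 0 \<le> M i j"
    and fact: "psd_factorization p q M A0 B0"
  shows "\<exists>A B :: nat \<Rightarrow> real^'k^'k.
           psd_factorization p q M A B \<and>
           (\<forall>i<p. trace (A i) \<le> real CARD('k)) \<and>
           (\<forall>j<q. trace (B j) = (\<Sum>i<p. M i j))"
proof -
  have psA0: "\<And>i. i < p \<Longrightarrow> psd (A0 i)" and psB0: "\<And>j. j < q \<Longrightarrow> psd (B0 j)"
    and MA0: "\<And>i j. i < p \<Longrightarrow> j < q \<Longrightarrow> M i j = tr_inner (A0 i) (B0 j)"
    using fact by (auto simp: psd_factorization_def)
  define S where "S = (\<Sum>i<p. A0 i)"
  have symS: "transpose S = S"
  proof -
    have "(A0 i) $ b $ a = (A0 i) $ a $ b" if "i < p" for i a b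
      using psA0[OF that] unfolding psd_def by (metis transpose_def vec_lambda_beta)
    then show ?thesis
      by (simp add: S_def transpose_def vec_eq_iff)
  qed
  obtain U where orthU: "orthogonal_matrix U"
    and diagU0: "\<forall>a b. a \<noteq> b \<longrightarrow> (transpose U ** S ** U) $ a $ b = 0"
    using diagonalize[OF symS] by (elim exE conjE)
  have diagU: "(transpose U ** S ** U) $ a $ b = 0" if "a \<noteq> b" for a b
    using diagU0 that by blast
  define At where "At i = transpose U ** A0 i ** U" for i
  define Bt where "Bt j = transpose U ** B0 j ** U" for j
  define D where "D = transpose U ** S ** U"
  have DAt: "D = (\<Sum>i<p. At i)" by (simp add: D_def At_def S_def sum_congr_mat)
  have Dent: "D $ a $ b = (\<Sum>i<p. At i $ a $ b)" for a b by (simp add: DAt)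
  have psAt: "\<And>i. i < p \<Longrightarrow> psd (At i)" using psA0 by (simp add: At_def psd_congr)
  have psBt: "\<And>j. j < q \<Longrightarrow> psd (Bt j)" using psB0 by (simp add: Bt_def psd_congr)
  have MAt: "\<And>i j. i < p \<Longrightarrow> j < q \<Longrightarrow> M i j = tr_inner (At i) (Bt j)"
    using MA0 by (simp add: At_def Bt_def tr_congr[OF orthU])
  define dd where "dd a = D $ a $ a" for a
  have Atle: "At i $ a $ a \<le> dd a" if "i < p" for i a
  proof -
    have "At i $ a $ a \<le> (\<Sum>i'<p. At i' $ a $ a)"
      by (rule member_le_sum) (use that psAt psd_diag in auto)
    then show ?thesis by (simp add: dd_def Dent)
  qed
  have Atge: "0 \<le> At i $ a $ a" if "i < p" for i a using psAt[OF that] psd_diag by blast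
  have dd0: "0 \<le> dd a" for a
    unfolding dd_def Dent by (rule sum_nonneg) (use Atge in auto)
  have Atzero: "At i $ a $ b = 0" if "i < p" "\<not> dd a > 0" for i a b
  proof -
    have "dd a = 0" using dd0[of a] that by linarith
    then have "At i $ a $ a = 0" using Atle[OF that(1), of a] Atge[OF that(1), of a] by linarith
    then show ?thesis using psd_zero_row[OF psAt[OF that(1)]] by blast
  qed
  have Atzero': "At i $ b $ a = 0" if "i < p" "\<not> dd a > 0" for i a b
  proof -
    have "dd a = 0" using dd0[of a] that by linarith
    then have "At i $ a $ a = 0" using Atle[OF that(1), of a] Atge[OF that(1), of a] by linarith
    then show ?thesis using psd_zero_row[OF psAt[OF that(1)]] by blast
  qed
  define e where "e a = (if dd a > 0 then 1 / sqrt (dd a) else 0)" for a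
  define f where "f a = sqrt (dd a)" for a
  have ef: "e a * f a = (if dd a > 0 then 1 else 0)" for a
    by (simp add: e_def f_def)
  have ff: "f a * f a = dd a" for a using dd0[of a] by (simp add: f_def)
  define A where "A i = (\<chi> a b. e a * At i $ a $ b * e b)" for i
  define B where "B j = (\<chi> a b. f a * Bt j $ a $ b * f b)" for j
  have psA: "\<And>i. i < p \<Longrightarrow> psd (A i)" unfolding A_def by (rule psd_scale) (rule psAt)
  have psB: "\<And>j. j < q \<Longrightarrow> psd (B j)" unfolding B_def by (rule psd_scale) (rule psBt)
  have trAB: "tr_inner (A i) (B j) = tr_inner (At i) (Bt j)" if "i < p" for i j
  proof -
    have tm: "(e a * At i $ a $ b * e b) * (f b * Bt j $ b $ a * f a) = At i $ a $ b * Bt j $ b $ a" for a b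
    proof -
      have "(e a * At i $ a $ b * e b) * (f b * Bt j $ b $ a * f a)
          = (e a * f a) * (e b * f b) * (At i $ a $ b * Bt j $ b $ a)" by (simp add: mult_ac)
      also have "\<dots> = At i $ a $ b * Bt j $ b $ a"
        using Atzero[OF that, of a b] Atzero'[OF that, of b a] by (simp add: ef)
      finally show ?thesis .
    qed
    show ?thesis unfolding tr_inner_def trace_mult_formula A_def B_def by (simp only: vec_lambda_beta tm)
  qed
  have fac: "psd_factorization p q M A B"
    unfolding psd_factorization_def using psA psB MAt trAB by auto
  have trA: "trace (A i) \<le> real CARD('k)" if ip: "i < p" for i
  proof -
    have "trace (A i) = (\<Sum>a\<in>UNIV. e a * At i $ a $ a * e a)"
      by (simp add: trace_def A_def)
    also have "\<dots> \<le> (\<Sum>a\<in>(UNIV::'k set). 1)"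
    proof (rule sum_mono)
      fix a :: 'k
      show "e a * At i $ a $ a * e a \<le> 1"
      proof (cases "dd a > 0")
        case True
        have "e a * At i $ a $ a * e a = At i $ a $ a / dd a"
          using True by (simp add: e_def)
        also have "\<dots> \<le> 1" using True Atle[OF ip, of a] by simp
        finally show ?thesis .
      next
        case False then show ?thesis by (simp add: e_def)
      qed
    qed
    finally show ?thesis by simp
  qed
  have trB: "trace (B j) = (\<Sum>i<p. M i j)" if jq: "j < q" for j
  proof -
    have "trace (B j) = (\<Sum>a\<in>UNIV. dd a * Bt j $ a $ a)"
      unfolding trace_def B_def by (rule sum.cong[OF refl]) (simp add: ff[symmetric] algebra_simps)
    also have "\<dots> = (\<Sum>a\<in>UNIV. \<Sum>b\<in>UNIV. D $ a $ b * Bt j $ b $ a)"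
    proof (rule sum.cong[OF refl])
      fix a :: 'k
      have "(\<Sum>b\<in>UNIV. D $ a $ b * Bt j $ b $ a) = (\<Sum>b\<in>UNIV. if b = a then dd a * Bt j $ a $ a else 0)"
        by (rule sum.cong[OF refl]) (auto simp: dd_def D_def diagU)
      then show "dd a * Bt j $ a $ a = (\<Sum>b\<in>UNIV. D $ a $ b * Bt j $ b $ a)" by simp
    qed
    also have "\<dots> = (\<Sum>a\<in>UNIV. \<Sum>i<p. \<Sum>b\<in>UNIV. At i $ a $ b * Bt j $ b $ a)"
      unfolding Dent sum_distrib_right by (rule sum.cong[OF refl]) (rule sum.swap)
    also have "\<dots> = (\<Sum>i<p. \<Sum>a\<in>UNIV. \<Sum>b\<in>UNIV. At i $ a $ b * Bt j $ b $ a)"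
      by (rule sum.swap)
    also have "\<dots> = (\<Sum>i<p. M i j)"
      by (rule sum.cong[OF refl]) (simp add: MAt jq tr_inner_def trace_mult_formula)
    finally show ?thesis .
  qed
  show ?thesis using fac trA trB by blast
qed

end
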